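(* If $s\ge3$ and $s$ is odd, then $\mathrm{ex}(n,P^{(3)}_s)\ge\left(1-\frac{4}{(s-1)^2}+o(1)\right)\binom{n}{3}$, where $o(1)\to0$ as $n\to\infty$ with $s$ fixed.
   Context: An ordered $3$-uniform hypergraph is a $3$-uniform hypergraph with linearly ordered vertex set; $G$ contains $H$ if there is an order-preserving injection $f:V(H)\to V(G)$ with $f(e)\in E(G)$ for all $e\in E(H)$. $\mathrm{ex}(n,H)$ is the maximum number of edges of an $n$-vertex ordered $3$-uniform hypergraph not containing $H$. $P^{(3)}_s$ has vertices $v_1<\dots<v_s$ and edges $\{v_j,v_{j+1},v_{j+2}\}$ for $1\le j\le s-2$. *)

theory Defs
  imports "HOL-Analysis.Analysis"
begin

text \<open>An ordered 3-uniform hypergraph on n vertices: vertex set {0..<n} with the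
natural order of nat; edges are 3-element subsets of {0..<n}.
(Every ordered n-vertex hypergraph is isomorphic to one of these.)\<close>

definition hypergraph3 :: "nat \<Rightarrow> nat set set \<Rightarrow> bool" where
  "hypergraph3 n E \<longleftrightarrow> (\<forall>e\<in>E. e \<subseteq> {0..<n} \<and> card e = 3)"

definition contains_tight_path :: "nat \<Rightarrow> nat set set \<Rightarrow> bool" where
  "contains_tight_path s E \<longleftrightarrow>
     (\<exists>f::nat \<Rightarrow> nat. strict_mono_on {0..<s} f \<and>
        (\<forall>j. j + 2 < s \<longrightarrow> {f j, f (j+1), f (j+2)} \<in> E))"

definition ex_tight_path :: "nat \<Rightarrow> nat \<Rightarrow> nat" where
  "ex_tight_path n s =
     Max {card E | E. hypergraph3 n E \<and> \<not> contains_tight_path s E}"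

end

theory Submission
  imports Defs
begin

lemma lim3: "((\<lambda>n. (real n + real k)^3 / (real n*(real n-1)*(real n-2))) \<longlongrightarrow> 1) at_top"
proof -
  have a: "((\<lambda>n. (1 + real k / real n)^3 / ((1 - 1 / real n) * (1 - 2 / real n))) \<longlongrightarrow>
      (1 + 0)^3 / ((1 - 0) * (1 - 0))) sequentially"
    by (intro tendsto_intros lim_const_over_n) auto
  have ev: "\<forall>\<^sub>F n in sequentially. (1 + real k / real n)^3 / ((1 - 1 / real n) * (1 - 2 / real n))
      = (real n + real k)^3 / (real n*(real n-1)*(real n-2))"
    using eventually_gt_at_top[of "2::nat"]
  proof eventually_elim
    case (elim n)
    then have np: "real n > 0" and n1: "real n - 1 > 0" and n2: "real n - 2 > 0" by auto
    have "(1 + real k / real n)^3 = (real n + real k)^3 / real n ^ 3"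
      using np by (simp add: field_simps)
    moreover have "(1 - 1 / real n) * (1 - 2 / real n) = (real n - 1) * (real n - 2) / real n ^ 2"
      using np by (simp add: field_simps power2_eq_square)
    moreover have g: "\<And>A P x::real. x \<noteq> 0 \<Longrightarrow> P \<noteq> 0 \<Longrightarrow> (A / x^3) / (P / x^2) = A / (x*P)"
      by (simp add: field_simps power2_eq_square power3_eq_cube)
    moreover have "(real n - 1) * (real n - 2) \<noteq> 0" using n1 n2 by simp
    ultimately show ?case using np by (simp add: mult.assoc)
  qed
  show ?thesis using tendsto_cong[OF ev] a by simp
qed

lemma c3_real: "real (n choose 3) * 6 = real n * (real n - 1) * (real n - 2)"
proof -
  have "real (n choose 3) = (real n gchoose 3)" by (simp add: binomial_gbinomial)
  also have "\<dots> = (\<Prod>i = 0..<3. (real n - of_nat i) / of_nat (3 - i))" by (rule gbinomial_altdef_of_nat)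
  also have "\<dots> = real n / 3 * ((real n - 1) / 2) * (real n - 2)"
    by (simp add: numeral_3_eq_3 prod.atLeast0_lessThan_Suc)
  finally show ?thesis by simp
qed

lemma c3_le: "real (L choose 3) * 6 \<le> real L ^ 3"
proof -
  have "real (L choose 3) * 6 = real L * (real L - 1) * (real L - 2)" by (rule c3_real)
  also have "\<dots> \<le> real L ^ 3"
  proof (cases "L \<ge> 2")
    case True
    then have "real L - 1 \<le> real L" "real L - 2 \<le> real L" "0 \<le> real L - 1" "0 \<le> real L - 2" by auto
    then have "real L * (real L - 1) * (real L - 2) \<le> real L * real L * real L"
      by (intro mult_mono) auto
    then show ?thesis by (simp add: power3_eq_cube)
  next
    case False
    then have "L = 0 \<or> L = 1" by auto
    then show ?thesis by auto
  qed
  finally show ?thesis .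
qed

lemma pigeon:
  fixes g :: "nat \<Rightarrow> nat"
  assumes mono: "\<And>i j. i \<le> j \<Longrightarrow> j \<le> 2*k \<Longrightarrow> g i \<le> g j"
    and bnd: "g (2*k) < k"
  shows "\<exists>j. j + 2 \<le> 2*k \<and> g j = g (j+2)"
proof (rule ccontr)
  assume "\<not> ?thesis"
  note neg = this
  have step: "g j < g (j+2)" if "j + 2 \<le> 2*k" for j
  proof -
    have "g j \<le> g (j+2)" using mono[of j "j+2"] that by simp
    moreover have "g j \<noteq> g (j+2)" using neg that by blast
    ultimately show ?thesis by simp
  qed
  have "\<And>i. i \<le> k \<Longrightarrow> i \<le> g (2*i)"
  proof -
    fix i show "i \<le> k \<Longrightarrow> i \<le> g (2*i)"
    proof (induction i)
      case 0 then show ?case by simp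
    next
      case (Suc i)
      have "g (2*i) < g (2*i+2)" using step Suc.prems by auto
      then show ?case using Suc by simp
    qed
  qed
  from this[of k] bnd show False by simp
qed

lemma construction:
  fixes k n :: nat
  assumes k: "k \<ge> 1"
  shows "real (ex_tight_path n (2*k+1)) \<ge> real (n choose 3) - real k * real ((n div k + 1) choose 3)"
proof -
  define L where "L = n div k + 1"
  define T where "T = {e. e \<subseteq> {0..<n} \<and> card e = 3}"
  define B where "B = (\<Union>i<k. {e. e \<subseteq> {i*L..<(i+1)*L} \<and> card e = 3})"
  define E where "E = T - B"
  have nL: "n < k * L"
  proof -
    have "n = k*(n div k) + n mod k" by simp
    moreover have "n mod k < k" using k by simp
    ultimately have "n < k + k * (n div k)"
      by linarith
    then show ?thesis unfolding L_def by (simp add: algebra_simps)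
  qed
  have Lp: "L > 0" unfolding L_def by simp
  have finT: "finite T" unfolding T_def
    by (rule finite_subset[of _ "Pow {0..<n}"]) auto
  have cT: "card T = n choose 3" unfolding T_def using n_subsets[of "{0..<n}" 3] by simp
  have finB: "finite B" unfolding B_def
  proof (intro finite_UN_I)
    show "finite {..<k}" by simp
  next
    fix i show "finite {e. e \<subseteq> {i*L..<(i+1)*L} \<and> card e = 3}"
      by (rule finite_subset[of _ "Pow {i*L..<(i+1)*L}"]) auto
  qed
  have cB: "card B \<le> k * (L choose 3)"
  proof -
    have "card B \<le> (\<Sum>i<k. card {e. e \<subseteq> {i*L..<(i+1)*L} \<and> card e = 3})"
      unfolding B_def by (rule card_UN_le) simp
    also have "\<dots> = (\<Sum>i<k. L choose 3)"
      by (intro sum.cong refl) (simp add: n_subsets)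
    finally show ?thesis by simp
  qed
  have hyp: "hypergraph3 n E" unfolding hypergraph3_def E_def T_def by auto
  have nocont: "\<not> contains_tight_path (2*k+1) E"
  proof
    assume "contains_tight_path (2*k+1) E"
    then obtain f where sm: "strict_mono_on {0..<2*k+1} f"
      and ed: "\<And>j. j + 2 < 2*k+1 \<Longrightarrow> {f j, f (j+1), f (j+2)} \<in> E"
      unfolding contains_tight_path_def by blast
    have fn: "f i < n" if "i \<le> 2*k" for i
    proof -
      define j0 where "j0 = min i (2*k-2)"
      have "j0 + 2 < 2*k+1" unfolding j0_def using k by auto
      then have "{f j0, f (j0+1), f (j0+2)} \<in> E" by (rule ed)
      then have "{f j0, f (j0+1), f (j0+2)} \<subseteq> {0..<n}"
        unfolding E_def T_def by auto
      then have h: "f j0 < n" "f (j0+1) < n" "f (j0+2) < n" by auto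
      have "i = j0 \<or> i = j0+1 \<or> i = j0+2"
        unfolding j0_def using that k by auto
      then show ?thesis using h by (elim disjE) simp_all
    qed
    define g where "g i = f i div L" for i
    have fmono: "f i \<le> f j" if "i \<le> j" "j \<le> 2*k" for i j
    proof (cases "i = j")
      case False
      then have "f i < f j" using that by (intro strict_mono_onD[OF sm]) auto
      then show ?thesis by simp
    qed simp
    have gm: "g i \<le> g j" if "i \<le> j" "j \<le> 2*k" for i j
      unfolding g_def using fmono[OF that] by (rule div_le_mono)
    have gb: "g (2*k) < k" unfolding g_def using fn[of "2*k"] nL
      by (simp add: less_mult_imp_div_less mult.commute)
    obtain j where j: "j + 2 \<le> 2*k" "g j = g (j+2)" using pigeon[of k g, OF gm gb] by blast
    define i where "i = g j"
    have ik: "i < k" using gm[of "j" "2*k"] gb j unfolding i_def by simp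
    have mem: "f m \<in> {i*L..<(i+1)*L}" if "g m = i" for m
    proof -
      have d: "f m div L = i" using that unfolding g_def .
      have e: "f m = i*L + f m mod L" using d by (metis div_mult_mod_eq)
      have r: "f m mod L < L" using Lp by simp
      have a1: "i*L \<le> f m" using e by linarith
      have a2: "f m < i*L + L" using e r by linarith
      show ?thesis using a1 a2 by (simp add: algebra_simps)
    qed
    have g1: "g (j+1) = i" using gm[of j "j+1"] gm[of "j+1" "j+2"] j unfolding i_def by simp
    have sub: "{f j, f (j+1), f (j+2)} \<subseteq> {i*L..<(i+1)*L}"
      using mem[of j] mem[of "j+1"] mem[of "j+2"] g1 j unfolding i_def by auto
    have inE: "{f j, f (j+1), f (j+2)} \<in> E" using ed j by simp
    then have "card {f j, f (j+1), f (j+2)} = 3" unfolding E_def T_def by simp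
    then have "{f j, f (j+1), f (j+2)} \<in> B" unfolding B_def using sub ik by blast
    then show False using inE unfolding E_def by simp
  qed
  have finS: "finite {card E | E. hypergraph3 n E \<and> \<not> contains_tight_path (2*k+1) E}"
  proof -
    have "{card E | E. hypergraph3 n E \<and> \<not> contains_tight_path (2*k+1) E} \<subseteq> card ` Pow (Pow {0..<n})"
      unfolding hypergraph3_def by auto
    then show ?thesis by (rule finite_subset) simp
  qed
  have "card E \<le> ex_tight_path n (2*k+1)" unfolding ex_tight_path_def
    using hyp nocont by (intro Max_ge[OF finS]) auto
  moreover have "card T - card B \<le> card E" unfolding E_def by (rule diff_card_le_card_Diff[OF finB])
  ultimately have "card T \<le> ex_tight_path n (2*k+1) + card B" by linarith
  then have r1: "real (card T) \<le> real (ex_tight_path n (2*k+1)) + real (card B)"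
    by (simp only: of_nat_le_iff of_nat_add[symmetric])
  have "real (card B) \<le> real (k * (L choose 3))" using cB by (simp only: of_nat_le_iff)
  then have r2: "real (card B) \<le> real k * real (L choose 3)" by simp
  have r3: "real (card T) = real (n choose 3)" using cT by simp
  from r1 r2 r3 have "real (ex_tight_path n (2*k+1)) \<ge> real (n choose 3) - real k * real (L choose 3)"
    by linarith
  then show ?thesis unfolding L_def .
qed

theorem corollary4p3:
  fixes s :: nat
  assumes "s \<ge> 3" and "odd s"
  shows "\<forall>\<epsilon>>0. \<forall>\<^sub>F n in sequentially.
           real (ex_tight_path n s)
             \<ge> (1 - 4 / (real s - 1)^2 - \<epsilon>) * real (n choose 3)"
proof (intro allI impI)
  fix \<epsilon> :: real assume ep: "\<epsilon> > 0"
  obtain k where s: "s = 2*k+1" using assms(2) oddE by blast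
  have k: "k \<ge> 1" using assms(1) s by simp
  have kr: "real k \<ge> 1" using k by simp
  have sk: "4 / (real s - 1)^2 = 1 / (real k)^2" using s by (simp add: power2_eq_square)
  define \<delta> where "\<delta> = \<epsilon> * (real k)^2"
  have dp: "\<delta> > 0" unfolding \<delta>_def using ep kr by simp
  have lim: "((\<lambda>n. (real n + real k)^3 / (real n*(real n-1)*(real n-2))) \<longlongrightarrow> 1) at_top"
    by (rule lim3)
  have ev1: "\<forall>\<^sub>F n in sequentially. (real n + real k)^3 / (real n*(real n-1)*(real n-2)) < 1 + \<delta>"
    using order_tendstoD(2)[OF lim] dp by simp
  have ev2: "\<forall>\<^sub>F n in sequentially. n \<ge> 3" by (rule eventually_ge_at_top)
  show "\<forall>\<^sub>F n in sequentially. real (ex_tight_path n s) \<ge> (1 - 4 / (real s - 1)^2 - \<epsilon>) * real (n choose 3)"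
    using ev1 ev2
  proof eventually_elim
    case (elim n)
    define D where "D = real n*(real n-1)*(real n-2)"
    have Dp: "D > 0" unfolding D_def using elim(2) by simp
    have D6: "real (n choose 3) * 6 = D" unfolding D_def by (rule c3_real)
    have A: "(real n + real k)^3 \<le> (1 + \<delta>) * D"
      using elim(1) Dp unfolding D_def[symmetric] by (simp add: divide_less_eq)
    define L where "L = n div k + 1"
    have Lr: "real L * real k \<le> real n + real k"
    proof -
      have "L * k \<le> n + k" unfolding L_def by (simp add: algebra_simps)
      then show ?thesis by (metis of_nat_add of_nat_le_iff of_nat_mult)
    qed
    have "real k * (real (L choose 3) * 6) \<le> real k * real L ^ 3"
      using c3_le[of L] by (intro mult_left_mono) auto
    also have "real k * real L ^ 3 * (real k)^2 = (real L * real k)^3"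
      by (simp add: power3_eq_cube power2_eq_square)
    then have "real k * real L ^ 3 = (real L * real k)^3 / (real k)^2" using kr
      by (simp add: field_simps)
    also have "\<dots> \<le> (real n + real k)^3 / (real k)^2"
      using Lr kr by (intro divide_right_mono power_mono) auto
    also have "\<dots> \<le> (1 + \<delta>) * D / (real k)^2"
      using A by (intro divide_right_mono) auto
    also have "(1 + \<delta>) * D / (real k)^2 = (1/(real k)^2 + \<epsilon>) * D"
      unfolding \<delta>_def using kr by (simp add: field_simps)
    finally have F: "real k * (real (L choose 3) * 6) \<le> (1/(real k)^2 + \<epsilon>) * D" .
    define c where "c = 1/(real k)^2 + \<epsilon>"
    have F2: "(real k * real (L choose 3)) * 6 \<le> (c * real (n choose 3)) * 6"
      using F D6 unfolding c_def[symmetric] by (simp add: mult.assoc)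
    have B0: "real k * real (L choose 3) \<le> c * real (n choose 3)"
      using F2 by linarith
    have B: "real k * real (L choose 3) \<le> (1/(real k)^2 + \<epsilon>) * real (n choose 3)"
      using B0 unfolding c_def .
    have C: "real (ex_tight_path n (2*k+1)) \<ge> real (n choose 3) - real k * real (L choose 3)"
      unfolding L_def using construction[OF k] .
    have eq: "(1 - 1/(real k)^2 - \<epsilon>) * real (n choose 3)
        = real (n choose 3) - (1/(real k)^2 + \<epsilon>) * real (n choose 3)"
      by (simp add: left_diff_distrib distrib_right)
    have G: "(1 - 1/(real k)^2 - \<epsilon>) * real (n choose 3) \<le> real (ex_tight_path n (2*k+1))"
      using B C eq by linarith
    show ?case by (subst sk, subst s, rule G)
  qed
qed

end
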